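(* Let $r$, $w$, and $t$ be positive integers with $t \geq r+w$. Let $t'$ be an integer with $0 \le t' \le t$ at which the function $x \mapsto \binom{x}{r}\binom{t-x}{w}$, defined on the integers $0 \le x \le t$, attains its maximum. If $d=\binom{t-r-w}{t'-r}$, then $$N((r,w;d),t)=bc_{d}(I_{t}(r,w))=bp_{d}(I_{t}(r,w))=\binom{t}{t'}.$$
   Context: Let $d,n,t,r,w$ be positive integers. A pair $(X,\mathcal B)$, where $X$ is a set of $n$ points and $\mathcal B=\{B_1,\ldots,B_t\}$ is a collection of $t$ subsets (blocks) of $X$, is an $(r,w;d)$-cover-free family with $t$ blocks if for any two sets of indices $L,M\subseteq\{1,\ldots,t\}$ with $L\cap M=\emptyset$, $|L|=r$, $|M|=w$, one has $\left|\left(\bigcap_{l\in L}B_l\right)\setminus\left(\bigcup_{m\in M}B_m\right)\right|\ge d$. $N((r,w;d),t)$ denotes the minimum number of points $|X|$ of an $(r,w;d)$-cover-free family having $t$ blocks. The bi-intersection graph $I_t(r,w)$ is the bipartite graph whose vertices are all $r$-subsets and all $w$-subsets of $\{1,\ldots,t\}$ (one part consisting of the $r$-subsets, the other of the $w$-subsets), where an $r$-subset is adjacent to a $w$-subset if and only if they are disjoint. A biclique of a graph $G$ is a complete bipartite subgraph of $G$. The $d$-biclique covering number $bc_d(G)$ (resp. $d$-biclique partition number $bp_d(G)$) is the minimum number of bicliques of $G$ such that every edge of $G$ belongs to at least $d$ (resp. exactly $d$) of these bicliques. Binomial coefficients $\binom{a}{b}$ are $0$ when $b<0$ or $b>a$.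 *)

theory Defs
  imports Main
begin

text \<open>Cover-free families. Blocks are indexed by 1..t; points are natural numbers
  (any finite point set can be relabelled into nat).\<close>

definition cover_free_family ::
  "nat \<Rightarrow> nat \<Rightarrow> nat \<Rightarrow> nat \<Rightarrow> nat set \<Rightarrow> (nat \<Rightarrow> nat set) \<Rightarrow> bool" where
  "cover_free_family r w d t X B \<longleftrightarrow>
     finite X \<and> (\<forall>i\<in>{1..t}. B i \<subseteq> X) \<and>
     (\<forall>L M. L \<subseteq> {1..t} \<and> M \<subseteq> {1..t} \<and> L \<inter> M = {} \<and> card L = r \<and> card M = w \<longrightarrow>
        d \<le> card ((\<Inter>l\<in>L. B l) - (\<Union>m\<in>M. B m)))"

definition N_cff :: "nat \<Rightarrow> nat \<Rightarrow> nat \<Rightarrow> nat \<Rightarrow> nat" where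
  "N_cff r w d t = (LEAST n. \<exists>X B. cover_free_family r w d t X B \<and> card X = n)"

type_synonym ('a, 'b) bigraph = "'a set \<times> 'b set \<times> ('a \<times> 'b) set"

definition bi_intersection_graph :: "nat \<Rightarrow> nat \<Rightarrow> nat \<Rightarrow> (nat set, nat set) bigraph" where
  "bi_intersection_graph t r w =
     ({R. R \<subseteq> {1..t} \<and> card R = r},
      {W. W \<subseteq> {1..t} \<and> card W = w},
      {(R, W). R \<subseteq> {1..t} \<and> card R = r \<and> W \<subseteq> {1..t} \<and> card W = w \<and> R \<inter> W = {}})"

definition bg_edges :: "('a, 'b) bigraph \<Rightarrow> ('a \<times> 'b) set" where
  "bg_edges G = snd (snd G)"

definition biclique :: "('a, 'b) bigraph \<Rightarrow> 'a set \<times> 'b set \<Rightarrow> bool" where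
  "biclique G AB \<longleftrightarrow> fst AB \<subseteq> fst G \<and> snd AB \<subseteq> fst (snd G) \<and>
                      fst AB \<times> snd AB \<subseteq> bg_edges G"

definition bc_d :: "nat \<Rightarrow> ('a, 'b) bigraph \<Rightarrow> nat" where
  "bc_d d G = (LEAST k. \<exists>f :: nat \<Rightarrow> 'a set \<times> 'b set.
      (\<forall>i<k. biclique G (f i)) \<and>
      (\<forall>e\<in>bg_edges G. d \<le> card {i. i < k \<and> e \<in> fst (f i) \<times> snd (f i)}))"

definition bp_d :: "nat \<Rightarrow> ('a, 'b) bigraph \<Rightarrow> nat" where
  "bp_d d G = (LEAST k. \<exists>f :: nat \<Rightarrow> 'a set \<times> 'b set.
      (\<forall>i<k. biclique G (f i)) \<and>
      (\<forall>e\<in>bg_edges G. card {i. i < k \<and> e \<in> fst (f i) \<times> snd (f i)} = d))"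

end

theory Submission
  imports Defs
begin

lemma G_simps:
  "bg_edges (bi_intersection_graph t r w) = {(R, W). R \<subseteq> {1..t} \<and> card R = r \<and> W \<subseteq> {1..t} \<and> card W = w \<and> R \<inter> W = {}}"
  "biclique (bi_intersection_graph t r w) (A,B) \<longleftrightarrow> A \<subseteq> {R. R \<subseteq> {1..t} \<and> card R = r} \<and> B \<subseteq> {W. W \<subseteq> {1..t} \<and> card W = w} \<and> A \<times> B \<subseteq> {(R, W). R \<subseteq> {1..t} \<and> card R = r \<and> W \<subseteq> {1..t} \<and> card W = w \<and> R \<inter> W = {}}"
  by (simp_all add: bg_edges_def biclique_def bi_intersection_graph_def)

lemma fin_subsets: "finite U \<Longrightarrow> finite {R. R \<subseteq> U \<and> P R}"
  by (rule finite_subset[of _ "Pow U"]) auto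

lemma prod_le:
  assumes bc: "biclique (bi_intersection_graph t r w) (A,B)"
    and mx: "\<forall>x\<le>t. (x choose r) * ((t - x) choose w) \<le> Mx"
  shows "card A * card B \<le> Mx"
proof (cases "A = {}")
  case True then show ?thesis by simp
next
  case False
  define U where "U = \<Union>A"
  have AL: "\<forall>R\<in>A. R \<subseteq> {1..t} \<and> card R = r" and BR: "\<forall>W\<in>B. W \<subseteq> {1..t} \<and> card W = w"
   and dis: "\<forall>R\<in>A. \<forall>W\<in>B. R \<inter> W = {}"
    using bc by (auto simp: G_simps)
  have U: "U \<subseteq> {1..t}" using AL U_def by auto
  have finU: "finite U" using U finite_subset by blast
  have cU: "card U \<le> t" using card_mono[OF _ U] by simp
  have AU: "A \<subseteq> {R. R \<subseteq> U \<and> card R = r}" using AL U_def by auto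
  hence cA: "card A \<le> card U choose r"
    using card_mono[OF fin_subsets[OF finU] AU] n_subsets[OF finU] by simp
  have BU: "B \<subseteq> {W. W \<subseteq> {1..t} - U \<and> card W = w}" using BR dis U_def by blast
  have fD: "finite ({1..t} - U)" by simp
  have "card B \<le> card ({1..t} - U) choose w"
    using card_mono[OF fin_subsets[OF fD] BU] n_subsets[OF fD] by simp
  moreover have "card ({1..t} - U) = t - card U" using card_Diff_subset[OF finU U] by simp
  ultimately have cB: "card B \<le> (t - card U) choose w" by simp
  have "card A * card B \<le> (card U choose r) * ((t - card U) choose w)"
    using cA cB mult_le_mono by blast
  also have "\<dots> \<le> Mx" using mx cU by blast
  finally show ?thesis .
qed

lemma card_E: "card (bg_edges (bi_intersection_graph t r w)) = (t choose r) * ((t - r) choose w)"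
proof -
  have eq: "bg_edges (bi_intersection_graph t r w) = Sigma {R. R\<subseteq>{1..t} \<and> card R = r} (\<lambda>R. {W. W \<subseteq> {1..t} - R \<and> card W = w})"
    by (auto simp: G_simps)
  have "card (Sigma {R. R\<subseteq>{1..t} \<and> card R = r} (\<lambda>R. {W. W \<subseteq> {1..t} - R \<and> card W = w}))
     = (\<Sum>R\<in>{R. R\<subseteq>{1..t} \<and> card R = r}. card {W. W \<subseteq> {1..t} - R \<and> card W = w})"
    by (intro card_SigmaI) (auto intro: fin_subsets)
  also have "\<dots> = (\<Sum>R\<in>{R. R\<subseteq>{1..t} \<and> card R = r}. (t - r) choose w)"
  proof (rule sum.cong)
    fix R assume "R \<in> {R. R\<subseteq>{1..t} \<and> card R = r}"
    hence "card ({1..t} - R) = t - r" using card_Diff_subset[of R "{1..t}"] finite_subset by auto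
    thus "card {W. W \<subseteq> {1..t} - R \<and> card W = w} = (t - r) choose w"
      using n_subsets[of "{1..t} - R" w] by simp
  qed simp
  also have "\<dots> = (t choose r) * ((t - r) choose w)" using n_subsets[of "{1..t}" r] by simp
  finally show ?thesis using eq by simp
qed

lemma count_lower:
  fixes I :: "'i set" and P :: "'i \<Rightarrow> nat set set \<times> nat set set"
  assumes fin: "finite I"
    and bic: "\<forall>i\<in>I. biclique (bi_intersection_graph t r w) (P i)"
    and cov: "\<forall>e\<in>bg_edges (bi_intersection_graph t r w). d \<le> card {i\<in>I. e \<in> fst (P i) \<times> snd (P i)}"
    and mx: "\<forall>x\<le>t. (x choose r) * ((t - x) choose w) \<le> Mx"
    and key: "d * ((t choose r) * ((t - r) choose w)) = C * Mx"
    and pos: "Mx > 0"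
  shows "C \<le> card I"
proof -
  define E where "E = bg_edges (bi_intersection_graph t r w)"
  define Q where "Q i = fst (P i) \<times> snd (P i)" for i
  have finE: "finite E" unfolding E_def G_simps
    by (rule finite_subset[of _ "Pow {1..t} \<times> Pow {1..t}"]) auto
  have QE: "Q i \<subseteq> E" if "i \<in> I" for i
    using bic that unfolding Q_def E_def biclique_def by blast
  have "C * Mx = d * card E" using key card_E E_def by simp
  also have "\<dots> = (\<Sum>e\<in>E. d)" by simp
  also have "\<dots> \<le> (\<Sum>e\<in>E. card {i\<in>I. e \<in> Q i})"
    by (rule sum_mono) (use cov in \<open>auto simp: E_def Q_def\<close>)
  also have "\<dots> = (\<Sum>e\<in>E. \<Sum>i\<in>I. if e \<in> Q i then 1 else 0)"
  proof (rule sum.cong[OF refl])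
    fix e
    show "card {i\<in>I. e \<in> Q i} = (\<Sum>i\<in>I. if e \<in> Q i then 1 else 0)"
      using sum.inter_filter[OF fin, of "\<lambda>_. 1::nat" "\<lambda>i. e \<in> Q i"] by simp
  qed
  also have "\<dots> = (\<Sum>i\<in>I. \<Sum>e\<in>E. if e \<in> Q i then 1 else 0)"
    by (rule sum.swap)
  also have "\<dots> = (\<Sum>i\<in>I. card (Q i))"
  proof (rule sum.cong)
    fix i assume "i \<in> I"
    hence "E \<inter> Q i = Q i" using QE by blast
    thus "(\<Sum>e\<in>E. if e \<in> Q i then 1 else 0) = card (Q i)"
      using finE sum.inter_filter[OF finE, of "\<lambda>_. 1::nat" "\<lambda>e. e \<in> Q i", symmetric] by (simp add: Int_def)
  qed simp
  also have "\<dots> \<le> (\<Sum>i\<in>I. Mx)"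
  proof (rule sum_mono)
    fix i assume "i \<in> I"
    hence "biclique (bi_intersection_graph t r w) (fst (P i), snd (P i))" using bic by simp
    thus "card (Q i) \<le> Mx" using prod_le[OF _ mx] by (simp add: Q_def card_cartesian_product)
  qed
  also have "\<dots> = card I * Mx" by simp
  finally show ?thesis using pos by simp
qed

lemma count_T:
  assumes L: "L \<subseteq> {1..t}" and M: "M \<subseteq> {1..t}" and LM: "L \<inter> M = {}"
    and cL: "card L = r" and cM: "card M = w" and rt: "r \<le> t'"
  shows "card {T. T \<subseteq> {1..t} \<and> card T = t' \<and> L \<subseteq> T \<and> T \<inter> M = {}} = (t - r - w) choose (t' - r)"
proof -
  define D where "D = {1..t} - (L \<union> M)"
  have fL: "finite L" and fM: "finite M" using L M finite_subset by auto
  have "card (L \<union> M) = r + w" using card_Un_disjoint[OF fL fM LM] cL cM by simp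
  hence cD: "card D = t - r - w" unfolding D_def using card_Diff_subset[of "L \<union> M" "{1..t}"] fL fM L M by simp
  have fD: "finite D" by (simp add: D_def)
  have bij: "bij_betw (\<lambda>U. U \<union> L) {U. U \<subseteq> D \<and> card U = t' - r}
      {T. T \<subseteq> {1..t} \<and> card T = t' \<and> L \<subseteq> T \<and> T \<inter> M = {}}"
  proof (rule bij_betw_byWitness[where f' = "\<lambda>T. T - L"])
    show "\<forall>a\<in>{U. U \<subseteq> D \<and> card U = t' - r}. a \<union> L - L = a" unfolding D_def by blast
    show "\<forall>a'\<in>{T. T \<subseteq> {1..t} \<and> card T = t' \<and> L \<subseteq> T \<and> T \<inter> M = {}}. a' - L \<union> L = a'" by blast
    show "(\<lambda>U. U \<union> L) ` {U. U \<subseteq> D \<and> card U = t' - r}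
        \<subseteq> {T. T \<subseteq> {1..t} \<and> card T = t' \<and> L \<subseteq> T \<and> T \<inter> M = {}}"
    proof safe
      fix U assume U: "U \<subseteq> D" "card U = t' - r"
      have fU: "finite U" using U fD finite_subset by auto
      have "U \<inter> L = {}" using U unfolding D_def by blast
      thus "card (U \<union> L) = t'" using card_Un_disjoint[OF fU fL] U cL rt by simp
    qed (use L LM D_def in auto)
    show "(\<lambda>T. T - L) ` {T. T \<subseteq> {1..t} \<and> card T = t' \<and> L \<subseteq> T \<and> T \<inter> M = {}}
        \<subseteq> {U. U \<subseteq> D \<and> card U = t' - r}"
    proof (rule image_subsetI)
      fix T assume "T \<in> {T. T \<subseteq> {1..t} \<and> card T = t' \<and> L \<subseteq> T \<and> T \<inter> M = {}}"
      hence T: "T \<subseteq> {1..t}" "card T = t'" "L \<subseteq> T" "T \<inter> M = {}" by auto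
      have "card (T - L) = t' - r" using card_Diff_subset[OF fL T(3)] T cL by simp
      thus "T - L \<in> {U. U \<subseteq> D \<and> card U = t' - r}" using T by (auto simp: D_def)
    qed
  qed
  have "card {U. U \<subseteq> D \<and> card U = t' - r} = (t - r - w) choose (t' - r)"
    using n_subsets[OF fD] cD by simp
  thus ?thesis using bij_betw_same_card[OF bij] by simp
qed

lemma card_bij_filter:
  fixes k :: nat
  assumes "bij_betw g {0..<k} S"
  shows "card {i. i < k \<and> P (g i)} = card {T\<in>S. P T}"
proof -
  have inj: "inj_on g {i. i < k \<and> P (g i)}"
  proof (rule inj_on_subset)
    show "inj_on g {0..<k}" using assms by (simp add: bij_betw_def)
  qed auto
  have "g ` {i. i < k \<and> P (g i)} = {T\<in>S. P T}"
    using assms unfolding bij_betw_def by auto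
  thus ?thesis using card_image[OF inj] by simp
qed

theorem theorem1:
  fixes r w t t' d :: nat
  assumes "r > 0" and "w > 0" and "t > 0" and "t \<ge> r + w"
    and "t' \<le> t"
    and "\<forall>x\<le>t. (x choose r) * ((t - x) choose w) \<le> (t' choose r) * ((t - t') choose w)"
    and "d = (t - r - w) choose (t' - r)"
  shows "N_cff r w d t = bc_d d (bi_intersection_graph t r w)
       \<and> bc_d d (bi_intersection_graph t r w) = bp_d d (bi_intersection_graph t r w)
       \<and> bp_d d (bi_intersection_graph t r w) = t choose t'"
proof -
  note r0 = assms(1) and w0 = assms(2) and trw = assms(4) and tt = assms(5)
    and mx = assms(6) and dd = assms(7)
  define Mx where "Mx = (t' choose r) * ((t - t') choose w)"
  define C where "C = t choose t'"
  define G where "G = bi_intersection_graph t r w"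
  have h1: "(r choose r) * ((t - r) choose w) \<le> Mx" using mx[rule_format, of r] trw unfolding Mx_def by simp
  have h2: "0 < (t - r) choose w" using trw by simp
  have pos: "Mx > 0" using less_le_trans[OF h2] h1 by simp
  hence rt': "r \<le> t'" and wt': "w \<le> t - t'" unfolding Mx_def by auto
  have key: "d * ((t choose r) * ((t - r) choose w)) = C * Mx"
  proof -
    have e1: "(t choose t') * (t' choose r) = (t choose r) * ((t - r) choose (t' - r))"
      using choose_mult[OF rt' tt] .
    define n where "n = t - r"
    define a where "a = t' - r"
    have an: "a \<le> n" and wna: "w \<le> n - a" and tta: "t - t' = n - a"
      using rt' wt' tt unfolding n_def a_def by auto
    have "(n choose a) * ((n - a) choose w) = (n choose (n - a)) * ((n - a) choose w)"
      using binomial_symmetric[OF an] by simp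
    also have "\<dots> = (n choose w) * ((n - w) choose (n - a - w))"
      using choose_mult[OF wna] by simp
    also have "(n - w) choose (n - a - w) = (n - w) choose a"
      proof -
      have "a \<le> n - w" using wna an by arith
      thus ?thesis using binomial_symmetric[of a "n - w"] by (simp add: add.commute)
    qed
    finally have e2: "(n choose a) * ((n - a) choose w) = (n choose w) * ((n - w) choose a)" .
    have "C * Mx = ((t choose t') * (t' choose r)) * ((t - t') choose w)"
      unfolding C_def Mx_def by simp
    also have "\<dots> = (t choose r) * ((n choose a) * ((n - a) choose w))"
      using e1 tta unfolding n_def a_def by simp
    also have "\<dots> = (t choose r) * ((n choose w) * ((n - w) choose a))" using e2 by simp
    also have "\<dots> = d * ((t choose r) * ((t - r) choose w))"
      unfolding dd n_def a_def by (simp add: diff_diff_left)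
    finally show ?thesis by simp
  qed
  define S where "S = {T. T \<subseteq> {1..t} \<and> card T = t'}"
  have fS: "finite S" unfolding S_def using fin_subsets by simp
  have cS: "card S = C" unfolding S_def C_def using n_subsets[of "{1..t}" t'] by simp
  obtain g where g: "bij_betw g {0..<C} S" using ex_bij_betw_nat_finite[OF fS] cS by auto
  have gS: "g i \<subseteq> {1..t}" "card (g i) = t'" if "i < C" for i
    using g that unfolding bij_betw_def S_def by auto
  have cnt: "card {i. i < C \<and> L \<subseteq> g i \<and> g i \<inter> M = {}} = d"
    if "(L, M) \<in> bg_edges G" for L M
  proof -
    have LM: "L \<subseteq> {1..t}" "M \<subseteq> {1..t}" "L \<inter> M = {}" "card L = r" "card M = w"
      using that unfolding G_def G_simps by auto
    have "card {i. i < C \<and> L \<subseteq> g i \<and> g i \<inter> M = {}} = card {T\<in>S. L \<subseteq> T \<and> T \<inter> M = {}}"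
      using card_bij_filter[OF g, of "\<lambda>T. L \<subseteq> T \<and> T \<inter> M = {}"] by simp
    also have "{T\<in>S. L \<subseteq> T \<and> T \<inter> M = {}} = {T. T \<subseteq> {1..t} \<and> card T = t' \<and> L \<subseteq> T \<and> T \<inter> M = {}}"
      unfolding S_def by auto
    also have "card \<dots> = d" using count_T[OF LM rt'] dd by simp
    finally show ?thesis .
  qed
  define f where "f i = ({R. R \<subseteq> g i \<and> card R = r}, {W. W \<subseteq> {1..t} - g i \<and> card W = w})" for i
  have fb: "\<forall>i<C. biclique G (f i)"
  proof (intro allI impI)
    fix i assume "i < C"
    thus "biclique G (f i)" using gS[of i] unfolding G_def f_def G_simps by auto
  qed
  have fc: "\<forall>e\<in>bg_edges G. card {i. i < C \<and> e \<in> fst (f i) \<times> snd (f i)} = d"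
  proof
    fix e assume e: "e \<in> bg_edges G"
    obtain L M where eLM: "e = (L, M)" by (cases e)
    have LM: "L \<subseteq> {1..t}" "M \<subseteq> {1..t}" "L \<inter> M = {}" "card L = r" "card M = w"
      using e unfolding eLM G_def G_simps by auto
    have "{i. i < C \<and> e \<in> fst (f i) \<times> snd (f i)} = {i. i < C \<and> L \<subseteq> g i \<and> g i \<inter> M = {}}"
      unfolding eLM f_def using LM by auto
    thus "card {i. i < C \<and> e \<in> fst (f i) \<times> snd (f i)} = d" using cnt e eLM by simp
  qed
  have lower: "C \<le> k" if "\<forall>i<k. biclique G (h i)"
      "\<forall>e\<in>bg_edges G. d \<le> card {i. i < k \<and> e \<in> fst (h i) \<times> snd (h i)}" for k h
  proof -
    have "C \<le> card {..<k}"
    proof (rule count_lower[where P = h and Mx = Mx and d = d, OF _ _ _ mx[folded Mx_def] key pos])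
      show "\<forall>i\<in>{..<k}. biclique (bi_intersection_graph t r w) (h i)" using that G_def by auto
      show "\<forall>e\<in>bg_edges (bi_intersection_graph t r w). d \<le> card {i \<in> {..<k}. e \<in> fst (h i) \<times> snd (h i)}"
        using that(2) G_def by simp
    qed simp
    thus ?thesis by simp
  qed
  have ex_bp: "\<exists>f. (\<forall>i<C. biclique G (f i)) \<and> (\<forall>e\<in>bg_edges G. card {i. i < C \<and> e \<in> fst (f i) \<times> snd (f i)} = d)"
    using fb fc by blast
  have bp_le: "bp_d d G \<le> C" unfolding bp_d_def by (rule Least_le) (rule ex_bp)
  have bp_ge: "C \<le> bp_d d G"
  proof -
    have "\<exists>h. (\<forall>i<bp_d d G. biclique G (h i)) \<and> (\<forall>e\<in>bg_edges G. card {i. i < bp_d d G \<and> e \<in> fst (h i) \<times> snd (h i)} = d)"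
      unfolding bp_d_def by (rule LeastI[where k=C]) (rule ex_bp)
    then obtain h where h: "(\<forall>i<bp_d d G. biclique G (h i)) \<and> (\<forall>e\<in>bg_edges G. card {i. i < bp_d d G \<and> e \<in> fst (h i) \<times> snd (h i)} = d)" by blast
    show ?thesis using lower[of "bp_d d G" h] h by simp
  qed
  have ex_bc: "\<exists>f. (\<forall>i<C. biclique G (f i)) \<and> (\<forall>e\<in>bg_edges G. d \<le> card {i. i < C \<and> e \<in> fst (f i) \<times> snd (f i)})"
    using fb fc by (intro exI[of _ f]) simp
  have bc_le: "bc_d d G \<le> C" unfolding bc_d_def by (rule Least_le) (rule ex_bc)
  have bc_ge: "C \<le> bc_d d G"
  proof -
    have "\<exists>h. (\<forall>i<bc_d d G. biclique G (h i)) \<and> (\<forall>e\<in>bg_edges G. d \<le> card {i. i < bc_d d G \<and> e \<in> fst (h i) \<times> snd (h i)})"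
      unfolding bc_d_def by (rule LeastI[where k=C]) (rule ex_bc)
    then obtain h where h: "(\<forall>i<bc_d d G. biclique G (h i)) \<and> (\<forall>e\<in>bg_edges G. d \<le> card {i. i < bc_d d G \<and> e \<in> fst (h i) \<times> snd (h i)})" by blast
    show ?thesis using lower[of "bc_d d G" h] h by simp
  qed
  define X where "X = {0..<C}"
  define B where "B i = {p\<in>X. i \<in> g p}" for i
  have cffX: "cover_free_family r w d t X B"
    unfolding cover_free_family_def
  proof (intro conjI allI impI)
    show "finite X" by (simp add: X_def)
    show "\<forall>i\<in>{1..t}. B i \<subseteq> X" by (auto simp: B_def)
    fix L M assume LM: "L \<subseteq> {1..t} \<and> M \<subseteq> {1..t} \<and> L \<inter> M = {} \<and> card L = r \<and> card M = w"
    hence "L \<noteq> {}" using r0 by auto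
    hence "(\<Inter>l\<in>L. B l) - (\<Union>m\<in>M. B m) = {i. i < C \<and> L \<subseteq> g i \<and> g i \<inter> M = {}}"
      unfolding B_def X_def by auto
    moreover have "(L, M) \<in> bg_edges G" using LM unfolding G_def G_simps by auto
    ultimately show "d \<le> card ((\<Inter>l\<in>L. B l) - (\<Union>m\<in>M. B m))" using cnt by simp
  qed
  have exN: "\<exists>X B. cover_free_family r w d t X B \<and> card X = C"
    using cffX by (intro exI[of _ X] exI[of _ B]) (simp add: X_def)
  have N_le: "N_cff r w d t \<le> C" unfolding N_cff_def by (rule Least_le) (rule exN)
  have N_ge: "C \<le> N_cff r w d t"
  proof -
    have "\<exists>Y BB. cover_free_family r w d t Y BB \<and> card Y = N_cff r w d t"
      unfolding N_cff_def by (rule LeastI[where k=C]) (rule exN)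
    then obtain Y BB where Y: "cover_free_family r w d t Y BB" "card Y = N_cff r w d t"
      by blast
    have fY: "finite Y" and BY: "\<forall>i\<in>{1..t}. BB i \<subseteq> Y"
      and cf: "\<forall>L M. L \<subseteq> {1..t} \<and> M \<subseteq> {1..t} \<and> L \<inter> M = {} \<and> card L = r \<and> card M = w \<longrightarrow>
        d \<le> card ((\<Inter>l\<in>L. BB l) - (\<Union>m\<in>M. BB m))"
      using Y(1) unfolding cover_free_family_def by auto
    define P where "P p = ({R. R \<subseteq> {1..t} \<and> card R = r \<and> (\<forall>l\<in>R. p \<in> BB l)},
                           {W. W \<subseteq> {1..t} \<and> card W = w \<and> (\<forall>m\<in>W. p \<notin> BB m)})" for p
    have "C \<le> card Y"
    proof (rule count_lower[where P = P and Mx = Mx and d = d, OF fY _ _ mx[folded Mx_def] key pos])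
      show "\<forall>i\<in>Y. biclique (bi_intersection_graph t r w) (P i)"
        unfolding P_def G_simps by auto
      show "\<forall>e\<in>bg_edges (bi_intersection_graph t r w). d \<le> card {i \<in> Y. e \<in> fst (P i) \<times> snd (P i)}"
      proof
        fix e assume e: "e \<in> bg_edges (bi_intersection_graph t r w)"
        obtain L M where eLM: "e = (L, M)" by (cases e)
        have LM: "L \<subseteq> {1..t}" "M \<subseteq> {1..t}" "L \<inter> M = {}" "card L = r" "card M = w"
          using e unfolding eLM G_simps by auto
        have "L \<noteq> {}" using LM r0 by auto
        then obtain l where l: "l \<in> L" by auto
        have sub: "(\<Inter>l\<in>L. BB l) - (\<Union>m\<in>M. BB m) \<subseteq> {i \<in> Y. e \<in> fst (P i) \<times> snd (P i)}"
        proof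
          fix p assume p: "p \<in> (\<Inter>l\<in>L. BB l) - (\<Union>m\<in>M. BB m)"
          have "p \<in> Y" using p l BY LM(1) by blast
          thus "p \<in> {i \<in> Y. e \<in> fst (P i) \<times> snd (P i)}" using p LM unfolding eLM P_def by auto
        qed
        have "d \<le> card ((\<Inter>l\<in>L. BB l) - (\<Union>m\<in>M. BB m))" using cf LM by blast
        also have "\<dots> \<le> card {i \<in> Y. e \<in> fst (P i) \<times> snd (P i)}"
          by (rule card_mono[OF _ sub]) (simp add: fY)
        finally show "d \<le> card {i \<in> Y. e \<in> fst (P i) \<times> snd (P i)}" .
      qed
    qed
    thus ?thesis using Y(2) by simp
  qed
  show ?thesis using N_le N_ge bc_le bc_ge bp_le bp_ge unfolding G_def C_def by linarith
qed

end
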